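(* Let $d\ge1$ and let $f:\mathbb{R}^d\setminus\{0\}\to\mathbb{R}$ be differentiable and scale-invariant ($f(c\mathbf{w})=f(\mathbf{w})$ for all $\mathbf{w}\ne0$, $c>0$). Fix $\eta>0$, $\beta\in[0,1)$ and $\mathbf{w}_0\neq 0$. Let $(\mathbf{w}^{\mathrm{GD}}_t)_{t\ge0}$ be the vanilla gradient descent iterates $\mathbf{w}^{\mathrm{GD}}_0=\mathbf{w}_0$, $\mathbf{w}^{\mathrm{GD}}_{t+1}=\mathbf{w}^{\mathrm{GD}}_t-\eta\nabla f(\mathbf{w}^{\mathrm{GD}}_t)$, and let $(\mathbf{w}^{\mathrm{GDM}}_t)_{t\ge0}$ be the momentum gradient descent iterates $\mathbf{w}^{\mathrm{GDM}}_0=\mathbf{w}_0$, $\mathbf{p}_{-1}=0$, $\mathbf{p}_t=\beta\mathbf{p}_{t-1}+\nabla f(\mathbf{w}^{\mathrm{GDM}}_t)$, $\mathbf{w}^{\mathrm{GDM}}_{t+1}=\mathbf{w}^{\mathrm{GDM}}_t-\eta\mathbf{p}_t$ (all iterates assumed nonzero). Assume that the update norms of the two methods coincide, i.e. $\|\nabla f(\mathbf{w}^{\mathrm{GD}}_t)\|_2=\|\mathbf{p}_t\|_2$ for every $t\ge0$, and that $0<\sum_{t\ge0}\|\mathbf{p}_t\|_2^2<\infty$. Then $$\frac{\|\mathbf{w}_t^{\mathrm{GDM}}\|_2^2-\|\mathbf{w}_0\|_2^2}{\|\mathbf{w}_t^{\mathrm{GD}}\|_2^2-\|\mathbf{w}_0\|_2^2}\longrightarrow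 1+\frac{2\beta}{1-\beta}\quad\text{as } t\to\infty.$$
   Context: For scale-invariant differentiable $f$, $\mathbf{w}\cdot\nabla f(\mathbf{w})=0$, so vanilla gradient descent satisfies $\|\mathbf{w}^{\mathrm{GD}}_{t+1}\|_2^2=\|\mathbf{w}^{\mathrm{GD}}_t\|_2^2+\eta^2\|\nabla f(\mathbf{w}^{\mathrm{GD}}_t)\|_2^2$. The ratio is considered for $t$ large enough that the denominator is positive. *)

theory Defs
  imports "HOL-Analysis.Analysis"
begin

end

theory Submission
  imports Defs
begin

lemma orth:
  fixes f :: "'a::real_inner \<Rightarrow> real"
  assumes g: "GDERIV f w :> g" and w: "w \<noteq> 0"
    and si: "\<And>c. c > 0 \<Longrightarrow> f (c *\<^sub>R w) = f w"
  shows "inner w g = 0"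
proof -
  have d1: "((\<lambda>c::real. c *\<^sub>R w) has_derivative (\<lambda>h. h *\<^sub>R w)) (at 1)"
    by (auto intro!: derivative_eq_intros)
  have fd: "(f has_derivative (\<lambda>h. inner h g)) (at (1 *\<^sub>R w))"
    using g by (simp add: gderiv_def)
  have "((\<lambda>c. f (c *\<^sub>R w)) has_derivative (\<lambda>h. inner (h *\<^sub>R w) g)) (at 1)"
    using diff_chain_at[OF d1 fd] by (simp add: o_def)
  then have "((\<lambda>c. f w) has_derivative (\<lambda>h. inner (h *\<^sub>R w) g)) (at (1::real))"
    by (rule has_derivative_transform_within_open[where s="{0<..}"]) (auto simp: si)
  moreover have "((\<lambda>c. f w) has_derivative (\<lambda>h. 0)) (at (1::real))" by simp
  ultimately have "(\<lambda>h::real. inner (h *\<^sub>R w) g) = (\<lambda>h. 0)"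
    using has_derivative_unique by blast
  then have "inner (1 *\<^sub>R w) g = 0" by meson
  then show ?thesis by simp
qed


lemma nd: fixes x y :: "'a::real_inner"
  shows "(norm (x - c *\<^sub>R y))\<^sup>2 = (norm x)\<^sup>2 - 2*c*inner x y + c\<^sup>2*(norm y)\<^sup>2"
  unfolding power2_norm_eq_inner
  by (simp add: inner_diff_left inner_diff_right inner_commute power2_eq_square algebra_simps)

theorem mainTheorem2:
  fixes f :: "real ^ 'd \<Rightarrow> real"
    and grad :: "real ^ 'd \<Rightarrow> real ^ 'd"
    and \<eta> \<beta> :: real
    and w0 :: "real ^ 'd"
    and wGD wGDM p :: "nat \<Rightarrow> real ^ 'd"
  assumes grad: "\<And>w. w \<noteq> 0 \<Longrightarrow> GDERIV f w :> grad w"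
    and scale_inv: "\<And>w c. w \<noteq> 0 \<Longrightarrow> c > 0 \<Longrightarrow> f (c *\<^sub>R w) = f w"
    and eta: "\<eta> > 0"
    and beta: "0 \<le> \<beta>" "\<beta> < 1"
    and w0: "w0 \<noteq> 0"
    and GD0: "wGD 0 = w0"
    and GDstep: "\<And>t. wGD (Suc t) = wGD t - \<eta> *\<^sub>R grad (wGD t)"
    and GDM0: "wGDM 0 = w0"
    and p0: "p 0 = grad (wGDM 0)"
    and pstep: "\<And>t. p (Suc t) = \<beta> *\<^sub>R p t + grad (wGDM (Suc t))"
    and GDMstep: "\<And>t. wGDM (Suc t) = wGDM t - \<eta> *\<^sub>R p t"
    and GD_nz: "\<And>t. wGD t \<noteq> 0"
    and GDM_nz: "\<And>t. wGDM t \<noteq> 0"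
    and norms_eq: "\<And>t. norm (grad (wGD t)) = norm (p t)"
    and summ: "summable (\<lambda>t. (norm (p t))\<^sup>2)"
    and pos: "(\<Sum>t. (norm (p t))\<^sup>2) > 0"
  shows "(\<lambda>t. ((norm (wGDM t))\<^sup>2 - (norm w0)\<^sup>2) / ((norm (wGD t))\<^sup>2 - (norm w0)\<^sup>2))
           \<longlonglongrightarrow> 1 + 2 * \<beta> / (1 - \<beta>)"
proof -
  define q where "q t = (norm (p t))\<^sup>2" for t
  define S where "S = (\<Sum>t. q t)"
  define Q where "Q t = (\<Sum>s<t. q s)" for t
  define b where "b t = - inner (wGDM t) (p t) / \<eta>" for t
  define B where "B t = (\<Sum>s<t. b s)" for t
  have orth': "\<And>w. w \<noteq> 0 \<Longrightarrow> inner w (grad w) = 0"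
    using orth[OF grad] scale_inv by blast
  have qnn: "q t \<ge> 0" for t by (simp add: q_def)
  have sq: "summable q" using summ by (simp add: q_def[abs_def])
  have Spos: "S > 0" using pos by (simp add: S_def q_def)
  have QS: "Q t \<le> S" for t unfolding Q_def S_def
    by (rule sum_le_suminf[OF sq]) (auto simp: qnn)
  have Qlim: "Q \<longlonglongrightarrow> S" unfolding Q_def[abs_def] S_def
    using summable_LIMSEQ[OF sq] .
  have b0: "b 0 = 0" using orth'[OF w0] by (simp add: b_def GDM0 p0)
  have bS: "b (Suc t) = \<beta> * (b t + q t)" for t
  proof -
    have "inner (wGDM (Suc t)) (p (Suc t)) = \<beta> * inner (wGDM (Suc t)) (p t)"
      using orth'[OF GDM_nz] by (simp add: pstep inner_add_right)
    also have "\<dots> = \<beta> * (inner (wGDM t) (p t) - \<eta> * q t)"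
      by (simp add: GDMstep inner_diff_left q_def power2_norm_eq_inner)
    finally show ?thesis using eta by (simp add: b_def field_simps)
  qed
  have bnn: "b t \<ge> 0" for t
    by (induction t) (use beta qnn in \<open>auto simp: b0 bS\<close>)
  have BS: "B (Suc t) = \<beta> * (B t + Q t)" for t
  proof (induction t)
    case 0 show ?case by (simp add: B_def Q_def b0 bS)
  next
    case (Suc t)
    have "B (Suc (Suc t)) = B (Suc t) + b (Suc t)" by (simp add: B_def)
    also have "\<dots> = \<beta> * (B t + Q t) + \<beta> * (b t + q t)"
      using Suc by (simp add: bS)
    also have "\<dots> = \<beta> * (B (Suc t) + Q (Suc t))"
      by (simp add: Q_def B_def algebra_simps)
    finally show ?case .
  qed
  have Bmono: "B t \<le> B (Suc t)" for t using bnn by (simp add: B_def)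
  have Bbd: "B t \<le> \<beta> * S / (1 - \<beta>)" for t
  proof (cases t)
    case 0 then show ?thesis using beta Spos by (simp add: B_def)
  next
    case (Suc n)
    have "B (Suc n) \<le> \<beta> * (B (Suc n) + S)"
      using BS[of n] Bmono[of n] QS[of n] beta
      by (metis add_mono mult_left_mono)
    then have "(1 - \<beta>) * B (Suc n) \<le> \<beta> * S" by (simp add: algebra_simps)
    then show ?thesis using Suc beta by (simp add: field_simps)
  qed
  have sb: "summable b"
    by (rule summableI_nonneg_bounded[where x="\<beta> * S / (1 - \<beta>)"])
       (use bnn Bbd in \<open>auto simp: B_def\<close>)
  define L where "L = suminf b"
  have Blim: "B \<longlonglongrightarrow> L" unfolding B_def[abs_def] L_def using summable_LIMSEQ[OF sb] .
  have "(\<lambda>t. B (Suc t)) \<longlonglongrightarrow> L" using Blim by (rule LIMSEQ_Suc)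
  moreover have "(\<lambda>t. B (Suc t)) \<longlonglongrightarrow> \<beta> * (L + S)"
    unfolding BS by (intro tendsto_intros Blim Qlim)
  ultimately have "L = \<beta> * (L + S)" using LIMSEQ_unique by blast
  then have Lval: "L = \<beta> * S / (1 - \<beta>)" using beta by (simp add: field_simps)
  have GDn: "(norm (wGD t))\<^sup>2 = (norm w0)\<^sup>2 + \<eta>\<^sup>2 * Q t" for t
  proof (induction t)
    case 0 show ?case by (simp add: GD0 Q_def)
  next
    case (Suc t)
    have "(norm (wGD (Suc t)))\<^sup>2 = (norm (wGD t))\<^sup>2 + \<eta>\<^sup>2 * (norm (grad (wGD t)))\<^sup>2"
      using orth'[OF GD_nz[of t]]
      by (simp add: GDstep nd)
    then show ?case using Suc by (simp add: norms_eq q_def Q_def algebra_simps)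
  qed
  have GDMn: "(norm (wGDM t))\<^sup>2 = (norm w0)\<^sup>2 + \<eta>\<^sup>2 * (Q t + 2 * B t)" for t
  proof (induction t)
    case 0 show ?case by (simp add: GDM0 Q_def B_def)
  next
    case (Suc t)
    have "inner (wGDM t) (p t) = - \<eta> * b t" using eta by (simp add: b_def)
    then have "(norm (wGDM (Suc t)))\<^sup>2 = (norm (wGDM t))\<^sup>2 + \<eta>\<^sup>2 * (q t + 2 * b t)"
      unfolding GDMstep nd q_def by (simp add: algebra_simps power2_eq_square)
    then show ?case using Suc by (simp add: Q_def B_def algebra_simps)
  qed
  have eq: "((norm (wGDM t))\<^sup>2 - (norm w0)\<^sup>2) / ((norm (wGD t))\<^sup>2 - (norm w0)\<^sup>2)
      = (Q t + 2 * B t) / Q t" for t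
    using eta by (simp add: GDn GDMn)
  have "(\<lambda>t. (Q t + 2 * B t) / Q t) \<longlonglongrightarrow> (S + 2 * L) / S"
    using Spos by (intro tendsto_intros Qlim Blim) auto
  moreover have "(S + 2 * L) / S = 1 + 2 * \<beta> / (1 - \<beta>)"
    using Spos beta by (simp add: Lval field_simps)
  ultimately show ?thesis unfolding eq by simp
qed

end
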